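(* Let $0\le a<b$ and $d\in\mathbb{R}$. Let $g$ be a complex-valued $C^1$ function on $[a,b]$ and $I$ a real-valued $C^2$ function on $[a,b]$ such that for some $\alpha>0$ the Lebesgue measure of $\{x\in[a,b]:I'(x)\in2\pi\mathbb{Z}+[-\delta,\delta]\}$ is $\mathcal{O}(\delta^\alpha)$ as $\delta\to0^+$. Let $f:\mathbb{Z}_{\ge0}\to\mathbb{C}$ satisfy $f(\lfloor tN\rfloor)=e^{iNI(t)}g(t)N^d+o(N^d)$ as $N\to\infty$ for each $t>0$, uniformly on $[a,b]$, i.e. \[ \sup_{t\in[a,b]}\frac{\big|f(\lfloor tN\rfloor)-e^{iNI(t)}g(t)N^d\big|}{N^d}\to0\quad(N\to\infty). \] Then, as $N\to\infty$, $\displaystyle\sum_{x=\lfloor aN\rfloor+1}^{\lfloor bN\rfloor}f(x)=o(N^{d+1})$. *)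

theory Defs
  imports "HOL-Analysis.Analysis" "HOL-Library.Landau_Symbols"
begin

end

theory Submission
  imports Defs
begin


lemma cos_k:
  fixes \<delta> y :: real
  assumes "0 \<le> \<delta>" "\<delta> \<le> pi"
  shows "(\<exists>k::int. \<bar>y - 2*pi* of_int k\<bar> \<le> \<delta>) \<longleftrightarrow> cos \<delta> \<le> cos y"
proof
  assume "\<exists>k::int. \<bar>y - 2*pi* of_int k\<bar> \<le> \<delta>"
  then obtain k::int where k: "\<bar>y - 2*pi* of_int k\<bar> \<le> \<delta>" by blast
  have "\<bar>2*pi* of_int (-k) + y\<bar> \<le> \<delta>" using k by simp
  then show "cos \<delta> \<le> cos y" using cos_monotone_aux assms by blast
next
  assume c: "cos \<delta> \<le> cos y"
  define k where "k = \<lfloor>(y+pi)/(2*pi)\<rfloor>"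
  have k1: "of_int k \<le> (y+pi)/(2*pi)" "(y+pi)/(2*pi) < of_int k + 1"
    unfolding k_def by linarith+
  have pos: "0 < 2*pi" by simp
  have l1: "2*pi* of_int k \<le> y + pi" using k1(1) pos by (simp add: field_simps)
  have l2: "y + pi < 2*pi* of_int k + 2*pi" using k1(2) pos by (simp add: field_simps)
  define y' where "y' = y - 2*pi* of_int k"
  have cy: "cos y' = cos y"
    unfolding y'_def cos_diff by (simp add: cos_int_2pin sin_int_2pin)
  have r: "-pi \<le> y'" "y' < pi" using l1 l2 unfolding y'_def by linarith+
  have "\<bar>y'\<bar> \<le> \<delta>"
  proof (rule ccontr)
    assume "\<not> \<bar>y'\<bar> \<le> \<delta>"
    then have "cos \<bar>y'\<bar> < cos \<delta>" using assms r by (intro cos_monotone_0_pi) auto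
    moreover have "cos \<bar>y'\<bar> = cos y'" by (simp add: abs_if)
    ultimately show False using c cy by simp
  qed
  then show "\<exists>k::int. \<bar>y - 2*pi* of_int k\<bar> \<le> \<delta>" unfolding y'_def by blast
qed

lemma exp_diff_bound:
  fixes u v :: real
  shows "cmod (exp (\<i> * of_real u) - exp (\<i> * of_real v)) \<le> \<bar>u - v\<bar>"
proof -
  have "exp (\<i> * of_real u) - exp (\<i> * of_real v) = exp (\<i> * of_real v) * (exp (\<i> * of_real (u - v)) - 1)"
    by (simp add: algebra_simps flip: exp_add)
  then have "cmod (exp (\<i> * of_real u) - exp (\<i> * of_real v)) = cmod (exp (\<i> * of_real (u - v)) - 1)"
    by (simp add: norm_mult)
  also have "\<dots> = 2 * \<bar>sin ((u - v)/2)\<bar>" by (rule dist_exp_i_1)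
  also have "\<dots> \<le> 2 * \<bar>(u-v)/2\<bar>" using abs_sin_x_le_abs_x[of "(u-v)/2"] by simp
  finally show ?thesis by simp
qed

lemma geom_bound:
  fixes \<theta> \<delta> :: real and L :: nat
  assumes "0 < \<delta>" "\<delta> \<le> pi" "cos \<theta> < cos \<delta>"
  shows "cmod (\<Sum>r<L. exp (\<i> * of_real \<theta>) ^ r) \<le> 1 / sin (\<delta>/2)"
proof -
  define z where "z = exp (\<i> * of_real \<theta>)"
  have sd: "0 < sin (\<delta>/2)" using assms by (intro sin_gt_zero) auto
  have "cos (2*(\<theta>/2)) < cos (2*(\<delta>/2))" using assms by simp
  then have "(sin (\<delta>/2))^2 < (sin (\<theta>/2))^2" unfolding cos_double_sin by simp
  then have "(sin (\<delta>/2))^2 < \<bar>sin (\<theta>/2)\<bar>^2" by simp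
  then have s: "sin (\<delta>/2) < \<bar>sin (\<theta>/2)\<bar>"
    using power_less_imp_less_base by fastforce
  have zn: "cmod (z - 1) = 2 * \<bar>sin (\<theta>/2)\<bar>" unfolding z_def by (rule dist_exp_i_1)
  then have z1: "z \<noteq> 1" using s sd by auto
  have nz: "cmod z = 1" unfolding z_def by simp
  have "(\<Sum>r<L. z ^ r) = (z ^ L - 1) / (z - 1)" using z1 by (rule geometric_sum)
  then have "cmod (\<Sum>r<L. z ^ r) = cmod (z ^ L - 1) / cmod (z - 1)" by (simp add: norm_divide)
  also have "\<dots> \<le> 2 / cmod (z - 1)"
  proof (rule divide_right_mono)
    have "cmod (z ^ L - 1) \<le> cmod (z ^ L) + cmod (1::complex)" by (rule norm_triangle_ineq4)
    also have "\<dots> = 2" using nz by (simp add: norm_power)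
    finally show "cmod (z ^ L - 1) \<le> 2" .
  qed simp
  also have "\<dots> \<le> 2 / (2 * sin (\<delta>/2))" unfolding zn
    using s sd by (intro divide_left_mono) auto
  finally show ?thesis unfolding z_def by simp
qed

lemma lin_bound:
  fixes I I' :: "real \<Rightarrow> real"
  assumes deriv: "\<And>u. u \<in> {a..b} \<Longrightarrow> (I has_real_derivative I' u) (at u within {a..b})"
    and t: "t \<in> {a..b}" and s: "s \<in> {a..b}"
    and close: "\<And>u. u \<in> {a..b} \<Longrightarrow> \<bar>u - t\<bar> \<le> \<bar>s - t\<bar> \<Longrightarrow> \<bar>I' u - I' t\<bar> \<le> \<eta>"
  shows "\<bar>I s - I t - I' t * (s - t)\<bar> \<le> \<eta> * \<bar>s - t\<bar>"
proof -
  define S where "S = closed_segment t s"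
  have Ssub: "S \<subseteq> {a..b}" unfolding S_def using t s
    by (simp add: closed_segment_subset)
  have d: "((\<lambda>u. I u - I' t * u) has_real_derivative (I' u - I' t)) (at u within S)" if "u \<in> S" for u
  proof -
    have "(I has_real_derivative I' u) (at u within S)"
      using deriv[of u] Ssub that DERIV_subset by blast
    then show ?thesis by (auto intro!: derivative_eq_intros)
  qed
  have b: "norm (I' u - I' t) \<le> \<eta>" if "u \<in> S" for u
  proof -
    have "\<bar>u - t\<bar> \<le> \<bar>s - t\<bar>" using that unfolding S_def
      by (auto simp: closed_segment_eq_real_ivl split: if_splits)
    then show ?thesis using close[of u] that Ssub by auto
  qed
  have "norm ((I s - I' t * s) - (I t - I' t * t)) \<le> \<eta> * norm (s - t)"
    by (rule field_differentiable_bound[OF _ d b]) (auto simp: S_def)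
  then show ?thesis by (simp add: algebra_simps)
qed


lemma ev_lin:
  fixes c A :: real
  assumes "c > 0"
  shows "\<forall>\<^sub>F N in sequentially. A < c * real N"
proof -
  obtain N0 :: nat where N0: "A / c < real N0" using reals_Archimedean2 by blast
  show ?thesis unfolding eventually_sequentially
  proof (intro exI allI impI)
    fix N assume "N0 \<le> N"
    then have "A / c < real N" using N0 by (meson of_nat_le_iff order_less_le_trans)
    then show "A < c * real N" using assms by (simp add: pos_divide_less_eq mult.commute)
  qed
qed

lemma term_err:
  fixes s t Nr \<eta> eg G :: real and r :: nat and g :: "real \<Rightarrow> complex" and I I' :: "real \<Rightarrow> real"
  assumes deriv: "\<And>u. u \<in> {a..b} \<Longrightarrow> (I has_real_derivative I' u) (at u within {a..b})"
   and st: "t \<in> {a..b}" "s \<in> {a..b}" and Npos: "Nr > 0" and rdef: "real r = Nr * (s - t)"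
   and close: "\<And>u. u \<in> {a..b} \<Longrightarrow> \<bar>u - t\<bar> \<le> \<bar>s - t\<bar> \<Longrightarrow> \<bar>I' u - I' t\<bar> \<le> \<eta>"
   and gs: "cmod (g s) \<le> G" and gst: "cmod (g s - g t) \<le> eg"
  shows "cmod (exp (\<i> * of_real (Nr * I s)) * g s - exp (\<i> * of_real (Nr * I t)) * g t * exp (\<i> * of_real (I' t)) ^ r)
          \<le> G * \<eta> * real r + eg"
proof -
  have lb: "\<bar>I s - I t - I' t * (s - t)\<bar> \<le> \<eta> * \<bar>s - t\<bar>"
    by (rule lin_bound[OF deriv st close]) auto
  have "0 \<le> Nr * (s - t)" using rdef by (metis of_nat_0_le_iff)
  then have stn: "s - t \<ge> 0" using Npos by (simp add: zero_le_mult_iff)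
  define \<psi> where "\<psi> = Nr * I t + real r * I' t"
  have ez: "exp (\<i> * of_real (Nr * I t)) * exp (\<i> * of_real (I' t)) ^ r = exp (\<i> * of_real \<psi>)"
    unfolding \<psi>_def by (simp add: exp_of_nat_mult[symmetric] algebra_simps flip: exp_add)
  have "Nr * I s - \<psi> = Nr * (I s - I t - I' t * (s - t))" unfolding \<psi>_def rdef by (simp add: algebra_simps)
  then have "\<bar>Nr * I s - \<psi>\<bar> = Nr * \<bar>I s - I t - I' t * (s - t)\<bar>" using Npos by (simp add: abs_mult)
  also have "\<dots> \<le> Nr * (\<eta> * \<bar>s - t\<bar>)" using lb Npos by simp
  also have "\<dots> = \<eta> * real r" using rdef stn by simp
  finally have ph: "\<bar>Nr * I s - \<psi>\<bar> \<le> \<eta> * real r" .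
  have "exp (\<i> * of_real (Nr * I s)) * g s - exp (\<i> * of_real (Nr * I t)) * g t * exp (\<i> * of_real (I' t)) ^ r
      = (exp (\<i> * of_real (Nr * I s)) - exp (\<i> * of_real \<psi>)) * g s + exp (\<i> * of_real \<psi>) * (g s - g t)"
    using ez by (simp add: algebra_simps)
  also have "cmod \<dots> \<le> cmod ((exp (\<i> * of_real (Nr * I s)) - exp (\<i> * of_real \<psi>)) * g s) + cmod (exp (\<i> * of_real \<psi>) * (g s - g t))"
    by (rule norm_triangle_ineq)
  also have "\<dots> \<le> \<eta> * real r * G + eg"
  proof (rule add_mono)
    have "cmod ((exp (\<i> * of_real (Nr * I s)) - exp (\<i> * of_real \<psi>)) * g s)
        = cmod (exp (\<i> * of_real (Nr * I s)) - exp (\<i> * of_real \<psi>)) * cmod (g s)" by (rule norm_mult)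
    also have "\<dots> \<le> \<bar>Nr * I s - \<psi>\<bar> * G"
      by (intro mult_mono exp_diff_bound gs) auto
    also have "\<dots> \<le> \<eta> * real r * G" using ph gs
      by (intro mult_right_mono) (auto intro: order.trans[OF norm_ge_zero])
    finally show "cmod ((exp (\<i> * of_real (Nr * I s)) - exp (\<i> * of_real \<psi>)) * g s) \<le> \<eta> * real r * G" .
    show "cmod (exp (\<i> * of_real \<psi>) * (g s - g t)) \<le> eg" using gst by (simp add: norm_mult)
  qed
  finally show ?thesis by (simp add: algebra_simps)
qed

lemma core:
  fixes a b \<epsilon> :: real and g :: "real \<Rightarrow> complex" and I I' :: "real \<Rightarrow> real"
  assumes ab: "0 \<le> a" "a < b"
   and gc: "continuous_on {a..b} g"
   and I_deriv: "\<And>t. t \<in> {a..b} \<Longrightarrow> (I has_real_derivative I' t) (at t within {a..b})"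
   and I'c: "continuous_on {a..b} I'"
   and msmall: "\<And>\<eta>. \<eta> > 0 \<Longrightarrow> \<exists>\<delta>. 0 < \<delta> \<and> \<delta> \<le> pi/2 \<and>
                   measure lebesgue {x\<in>{a..b}. cos (2*\<delta>) \<le> cos (I' x)} \<le> \<eta>"
   and \<epsilon>: "\<epsilon> > 0"
  shows "\<forall>\<^sub>F N in sequentially. cmod (\<Sum>x\<in>{nat \<lfloor>a * real N\<rfloor> + 1 .. nat \<lfloor>b * real N\<rfloor>}.
            exp (\<i> * of_real (real N * I (real x / real N))) * g (real x / real N)) \<le> \<epsilon> * real N"
proof -
  obtain G where G: "G > 0" "\<And>t. t \<in> {a..b} \<Longrightarrow> cmod (g t) \<le> G"
  proof -
    have "bounded (g ` {a..b})" using gc by (intro compact_imp_bounded compact_continuous_image) auto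
    then obtain B where "B > 0" "\<And>t. t \<in> {a..b} \<Longrightarrow> cmod (g t) \<le> B"
      unfolding bounded_pos by auto
    then show ?thesis using that by blast
  qed
  define W where "W = b - a + 1"
  have W: "W \<ge> 1" using ab unfolding W_def by simp
  obtain \<delta> where \<delta>: "0 < \<delta>" "\<delta> \<le> pi/2"
     and mE: "measure lebesgue {x\<in>{a..b}. cos (2*\<delta>) \<le> cos (I' x)} \<le> \<epsilon> / (8*G)"
    using msmall[of "\<epsilon>/(8*G)"] \<epsilon> G by auto
  define E where "E = {x\<in>{a..b}. cos (2*\<delta>) \<le> cos (I' x)}"
  have Ecomp: "compact E"
  proof -
    have "continuous_on {a..b} (\<lambda>x. cos (I' x))" using I'c by (intro continuous_intros)
    then have "closed ({a..b} \<inter> (\<lambda>x. cos (I' x)) -` {cos (2*\<delta>)..})"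
      by (intro continuous_closed_preimage) auto
    moreover have "E = {a..b} \<inter> (\<lambda>x. cos (I' x)) -` {cos (2*\<delta>)..}" unfolding E_def by auto
    ultimately show ?thesis by (metis bounded_Int bounded_closed_interval compact_eq_bounded_closed)
  qed
  then have Emeas: "E \<in> lmeasurable" by (rule lmeasurable_compact)
  define s\<delta> where "s\<delta> = sin (\<delta>/2)"
  have s\<delta>: "s\<delta> > 0" unfolding s\<delta>_def using \<delta> by (intro sin_gt_zero) auto
  define L :: nat where "L = nat \<lceil>8 * W * G / (s\<delta> * \<epsilon>)\<rceil> + 2"
  have L2: "L \<ge> 2" unfolding L_def by simp
  have Lbig: "real L \<ge> 8 * W * G / (s\<delta> * \<epsilon>)" unfolding L_def by linarith
  define \<eta> where "\<eta> = \<epsilon> / (8 * W * G * real L)"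
  have \<eta>: "\<eta> > 0" unfolding \<eta>_def using \<epsilon> W G L2 by simp
  have uI: "uniformly_continuous_on {a..b} I'" using I'c by (intro compact_uniformly_continuous) auto
  have ug: "uniformly_continuous_on {a..b} g" using gc by (intro compact_uniformly_continuous) auto
  obtain \<rho>1 where \<rho>1: "\<rho>1 > 0" "\<And>s t. s \<in> {a..b} \<Longrightarrow> t \<in> {a..b} \<Longrightarrow> \<bar>s - t\<bar> < \<rho>1 \<Longrightarrow> \<bar>I' s - I' t\<bar> < \<eta>"
    using uI \<eta> unfolding uniformly_continuous_on_def dist_real_def by metis
  obtain \<rho>2 where \<rho>2: "\<rho>2 > 0" "\<And>s t. s \<in> {a..b} \<Longrightarrow> t \<in> {a..b} \<Longrightarrow> \<bar>s - t\<bar> < \<rho>2 \<Longrightarrow> \<bar>I' s - I' t\<bar> < \<delta>"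
    using uI \<delta> unfolding uniformly_continuous_on_def dist_real_def by metis
  have e8: "\<epsilon> / (8 * W) > 0" using \<epsilon> W by simp
  obtain \<rho>3 where \<rho>3: "\<rho>3 > 0" "\<And>s t. s \<in> {a..b} \<Longrightarrow> t \<in> {a..b} \<Longrightarrow> \<bar>s - t\<bar> < \<rho>3 \<Longrightarrow> cmod (g s - g t) < \<epsilon> / (8 * W)"
    using ug e8 unfolding uniformly_continuous_on_def dist_real_def dist_norm by metis
  define \<rho> where "\<rho> = min \<rho>1 (min \<rho>2 \<rho>3)"
  have \<rho>: "\<rho> > 0" unfolding \<rho>_def using \<rho>1 \<rho>2 \<rho>3 by simp
  have ev1: "\<forall>\<^sub>F N in sequentially. real L / real N < \<rho>"
    using ev_lin[OF \<rho>, of "real L"] ev_lin[OF zero_less_one, of 0]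
  proof eventually_elim
    case (elim N)
    then have "real N > 0" by simp
    then show ?case using elim(1) by (simp add: divide_less_eq mult.commute)
  qed
  have ev2: "\<forall>\<^sub>F N in sequentially. real L * G < \<epsilon> / 8 * real N" using \<epsilon> by (intro ev_lin) simp
  have ev3: "\<forall>\<^sub>F N in sequentially. N \<ge> 1" by (rule eventually_ge_at_top)
  show ?thesis using ev1 ev2 ev3
  proof eventually_elim
    case (elim N)
    have N0: "real N > 0" using elim(3) by simp
    have N1: "real N \<ge> 1" using elim(3) by simp
    define p where "p = nat \<lfloor>a * real N\<rfloor> + 1"
    define q where "q = nat \<lfloor>b * real N\<rfloor>"
    define n where "n = q + 1 - p"
    define F where "F = (\<lambda>x::nat. exp (\<i> * of_real (real N * I (real x / real N))) * g (real x / real N))"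
    have pa: "a * real N < real p"
    proof -
      have "0 \<le> a * real N" using ab N0 by simp
      then have "real (nat \<lfloor>a * real N\<rfloor>) = of_int \<lfloor>a * real N\<rfloor>" by simp
      then show ?thesis unfolding p_def by linarith
    qed
    have qb: "real q \<le> b * real N"
    proof -
      have "0 \<le> b * real N" using ab N0 by simp
      then have "real (nat \<lfloor>b * real N\<rfloor>) = of_int \<lfloor>b * real N\<rfloor>" by simp
      then show ?thesis unfolding q_def by linarith
    qed
    have inab: "real x / real N \<in> {a..b}" if "p \<le> x" "x \<le> q" for x
    proof -
      have "a * real N \<le> real x" using pa that by linarith
      moreover have "real x \<le> b * real N" using qb that by linarith
      ultimately show ?thesis using N0 by (simp add: field_simps)
    qed
    have Fb: "cmod (F x) \<le> G" if "p \<le> x" "x \<le> q" for x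
      unfolding F_def using G(2)[OF inab[OF that]] by (simp add: norm_mult)
    have nW: "real n \<le> W * real N"
    proof (cases "p \<le> q + 1")
      case True
      then have "real n = real q + 1 - real p" unfolding n_def by simp
      also have "\<dots> \<le> (b - a) * real N + real N" using pa qb N1 by (simp add: algebra_simps)
      finally show ?thesis unfolding W_def by (simp add: algebra_simps)
    next
      case False
      then show ?thesis unfolding n_def using W N0 by simp
    qed
    have sum1: "(\<Sum>x\<in>{p..q}. F x) = (\<Sum>y<n. F (p + y))"
    proof -
      have "{p..q} = {0 + p..<n + p}" unfolding n_def by auto
      then have "(\<Sum>x\<in>{p..q}. F x) = (\<Sum>y\<in>{0..<n}. F (y + p))"
        by (simp only: sum.shift_bounds_nat_ivl)
      then show ?thesis by (simp add: atLeast0LessThan add.commute)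
    qed
    define K where "K = n div L"
    have KL: "K * L \<le> n" "n < K * L + L"
    proof -
      have e: "K * L + n mod L = n" unfolding K_def by (rule div_mult_mod_eq)
      have "n mod L < L" using L2 by simp
      then show "K * L \<le> n" "n < K * L + L" using e by linarith+
    qed
    have pts: "p \<le> p + j * L + r \<and> p + j * L + r \<le> q" if "j < K" "r < L" for j r
    proof -
      have "Suc j * L \<le> K * L" using that by (intro mult_le_mono1) simp
      then have "j * L + r < n" using that KL by simp
      then show ?thesis unfolding n_def by simp
    qed
    have split: "(\<Sum>y<n. F (p + y)) = (\<Sum>j<K. \<Sum>r<L. F (p + j * L + r)) + (\<Sum>y\<in>{K * L..<n}. F (p + y))"
    proof -
      have "(\<Sum>y<n. F (p + y)) = (\<Sum>y\<in>{0..<K*L}. F (p + y)) + (\<Sum>y\<in>{K * L..<n}. F (p + y))"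
        using KL by (simp add: atLeast0LessThan[symmetric] sum.atLeastLessThan_concat)
      moreover have "(\<Sum>y\<in>{0..<K*L}. F (p + y)) = (\<Sum>j<K. \<Sum>y\<in>{j*L..<j*L+L}. F (p + y))"
        by (simp add: atLeast0LessThan sum.nat_group)
      moreover have "(\<Sum>y\<in>{j*L..<j*L+L}. F (p + y)) = (\<Sum>r<L. F (p + j * L + r))" for j
      proof -
        have "{j*L..<j*L+L} = {0 + j*L..<L + j*L}" by (simp add: add.commute)
        then have "(\<Sum>y\<in>{j*L..<j*L+L}. F (p + y)) = (\<Sum>r\<in>{0..<L}. F (p + (r + j*L)))"
          by (simp only: sum.shift_bounds_nat_ivl)
        then show ?thesis by (simp add: atLeast0LessThan add_ac)
      qed
      ultimately show ?thesis by simp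
    qed
    define t where "t = (\<lambda>j. real (p + j * L) / real N)"
    define z where "z = (\<lambda>j. exp (\<i> * of_real (I' (t j))))"
    define e0 where "e0 = G * \<eta> * real L + \<epsilon> / (8 * W)"
    have LN: "real L / real N < \<rho>" using elim(1) .
    have blk: "cmod (\<Sum>r<L. F (p + j * L + r)) \<le> G * cmod (\<Sum>r<L. z j ^ r) + real L * e0" if j: "j < K" for j
    proof -
      have tin: "t j \<in> {a..b}" unfolding t_def using pts[OF j, of 0] L2 inab[of "p + j * L"] by auto
      have err: "cmod (F (p + j * L + r) - F (p + j * L) * z j ^ r) \<le> e0" if r: "r < L" for r
      proof -
        define s where "s = real (p + j * L + r) / real N"
        have sin: "s \<in> {a..b}" unfolding s_def using pts[OF j r] inab[of "p + j * L + r"] by blast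
        have rdef: "real r = real N * (s - t j)" unfolding s_def t_def using N0
          by (simp add: field_simps)
        have st: "\<bar>s - t j\<bar> < \<rho>"
        proof -
          have "s - t j = real r / real N" using rdef N0 by (simp add: field_simps)
          then have "\<bar>s - t j\<bar> = real r / real N" by simp
          also have "\<dots> \<le> real L / real N" using r N0 by (simp add: divide_right_mono)
          finally show ?thesis using LN by simp
        qed
        have "cmod (exp (\<i> * of_real (real N * I s)) * g s - exp (\<i> * of_real (real N * I (t j))) * g (t j) * exp (\<i> * of_real (I' (t j))) ^ r)
          \<le> G * \<eta> * real r + \<epsilon> / (8 * W)"
        proof (rule term_err[where g=g and G=G and \<eta>=\<eta> and eg="\<epsilon> / (8 * W)", OF I_deriv tin sin N0 rdef])
          show "\<bar>I' u - I' (t j)\<bar> \<le> \<eta>" if "u \<in> {a..b}" "\<bar>u - t j\<bar> \<le> \<bar>s - t j\<bar>" for u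
            using \<rho>1(2)[of u "t j"] that st tin unfolding \<rho>_def by auto
          show "cmod (g s) \<le> G" using G(2) sin by blast
          show "cmod (g s - g (t j)) \<le> \<epsilon> / (8 * W)"
            using \<rho>3(2)[of s "t j"] sin tin st unfolding \<rho>_def by auto
        qed
        also have "\<dots> \<le> e0" unfolding e0_def using r G \<eta> by (intro add_right_mono mult_left_mono) auto
        finally show ?thesis unfolding F_def z_def s_def t_def by simp
      qed
      have eq: "(\<Sum>r<L. F (p + j * L + r)) = F (p + j * L) * (\<Sum>r<L. z j ^ r) + (\<Sum>r<L. F (p + j * L + r) - F (p + j * L) * z j ^ r)"
        by (simp add: sum_distrib_left sum_subtractf)
      have "cmod (F (p + j * L) * (\<Sum>r<L. z j ^ r) + (\<Sum>r<L. F (p + j * L + r) - F (p + j * L) * z j ^ r))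
          \<le> cmod (F (p + j * L)) * cmod (\<Sum>r<L. z j ^ r) + (\<Sum>r<L. cmod (F (p + j * L + r) - F (p + j * L) * z j ^ r))"
        by (rule order.trans[OF norm_triangle_ineq add_mono]) (auto simp: norm_mult intro: norm_sum)
      also have "\<dots> \<le> G * cmod (\<Sum>r<L. z j ^ r) + (\<Sum>r<L. e0)"
        using Fb pts[OF j, of 0] L2 err by (intro add_mono mult_right_mono sum_mono) auto
      finally show ?thesis unfolding eq by simp
    qed
    have zL: "cmod (\<Sum>r<L. z j ^ r) \<le> real L" for j
    proof -
      have "cmod (\<Sum>r<L. z j ^ r) \<le> (\<Sum>r<L. cmod (z j ^ r))" by (rule norm_sum)
      also have "\<dots> = real L" unfolding z_def by (simp add: norm_power)
      finally show ?thesis .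
    qed
    have zgood: "cmod (\<Sum>r<L. z j ^ r) \<le> 1 / s\<delta>" if "\<not> cos \<delta> \<le> cos (I' (t j))" for j
      unfolding z_def s\<delta>_def using that \<delta> by (intro geom_bound) auto
    define Bad where "Bad = {j \<in> {..<K}. cos \<delta> \<le> cos (I' (t j))}"
    have finBad: "finite Bad" unfolding Bad_def by simp
    define A where "A = (\<lambda>j. {t j .. t j + (real L - 1) / real N})"
    have AE: "A j \<subseteq> E" if jB: "j \<in> Bad" for j
    proof
      fix u assume u: "u \<in> A j"
      have j: "j < K" and cj: "cos \<delta> \<le> cos (I' (t j))" using jB unfolding Bad_def by auto
      have tin: "t j \<in> {a..b}" unfolding t_def using pts[OF j, of 0] L2 inab[of "p + j * L"] by auto
      have last: "t j + (real L - 1) / real N = real (p + j * L + (L - 1)) / real N"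
        unfolding t_def using N0 L2 by (simp add: field_simps of_nat_diff)
      have lin: "real (p + j * L + (L - 1)) / real N \<in> {a..b}"
        using pts[OF j, of "L - 1"] L2 inab[of "p + j * L + (L - 1)"] by auto
      have uab: "u \<in> {a..b}" using u tin lin last unfolding A_def by auto
      have "\<bar>u - t j\<bar> \<le> (real L - 1) / real N" using u unfolding A_def by auto
      also have "\<dots> \<le> real L / real N" using N0 by (simp add: divide_right_mono)
      finally have "\<bar>u - t j\<bar> < \<rho>2" using LN unfolding \<rho>_def by linarith
      then have d1: "\<bar>I' u - I' (t j)\<bar> < \<delta>" using \<rho>2(2) uab tin by blast
      obtain k :: int where k: "\<bar>I' (t j) - 2 * pi * of_int k\<bar> \<le> \<delta>"
        using cos_k[of \<delta> "I' (t j)"] cj \<delta> by auto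
      have "\<bar>I' u - 2 * pi * of_int k\<bar> \<le> 2 * \<delta>" using d1 k by linarith
      then have "cos (2 * \<delta>) \<le> cos (I' u)" using cos_k[of "2 * \<delta>" "I' u"] \<delta> by auto
      then show "u \<in> E" unfolding E_def using uab by simp
    qed
    have key: "t i + (real L - 1) / real N < t j" if "i < j" for i j
    proof -
      have "Suc i * L \<le> j * L" using that by (intro mult_le_mono1) simp
      then have "p + i * L + L \<le> p + j * L" by simp
      then have "real (p + i * L + L) \<le> real (p + j * L)" by (rule of_nat_mono)
      then have "real (p + i * L) + real L \<le> real (p + j * L)" by (simp only: of_nat_add)
      then have "real (p + i * L) + (real L - 1) < real (p + j * L)" by linarith
      then have "(real (p + i * L) + (real L - 1)) / real N < real (p + j * L) / real N"
        using N0 by (simp add: divide_strict_right_mono)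
      then show ?thesis unfolding t_def by (simp add: add_divide_distrib)
    qed
    have disj: "disjoint_family_on A Bad"
      unfolding disjoint_family_on_def
    proof (intro ballI impI)
      fix i j assume "i \<in> Bad" "j \<in> Bad" "i \<noteq> j"
      then consider "i < j" | "j < i" by linarith
      then show "A i \<inter> A j = {}"
      proof cases
        case 1 then show ?thesis using key[OF 1] unfolding A_def by auto
      next
        case 2 then show ?thesis using key[OF 2] unfolding A_def by auto
      qed
    qed
    have Asets: "A j \<in> sets lebesgue" for j unfolding A_def by simp
    have measU: "measure lebesgue (\<Union>j\<in>Bad. A j) = (\<Sum>j\<in>Bad. measure lebesgue (A j))"
      by (rule measure_finite_Union[OF finBad _ disj]) (auto simp: Asets A_def emeasure_lborel_Icc_eq)
    also have "\<dots> = real (card Bad) * ((real L - 1) / real N)"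
      unfolding A_def using L2 N0 by simp
    finally have mU: "measure lebesgue (\<Union>j\<in>Bad. A j) = real (card Bad) * ((real L - 1) / real N)" .
    have "measure lebesgue (\<Union>j\<in>Bad. A j) \<le> measure lebesgue E"
      by (rule measure_mono_fmeasurable) (use AE Emeas Asets finBad in auto)
    then have "real (card Bad) * ((real L - 1) / real N) \<le> \<epsilon> / (8 * G)"
      using mU mE unfolding E_def by simp
    then have cB: "real (card Bad) * (real L - 1) \<le> \<epsilon> / (8 * G) * real N"
      using N0 by (simp add: field_simps)
    have sBad: "(\<Sum>j<K. (if j \<in> Bad then G * real L else 0)) = real (card Bad) * (G * real L)"
    proof -
      have "{..<K} \<inter> Bad = Bad" unfolding Bad_def by auto
      then have "(\<Sum>j<K. (if j \<in> Bad then G * real L else 0)) = (\<Sum>j\<in>Bad. G * real L)"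
        using sum.inter_restrict[of "{..<K}" "\<lambda>_. G * real L" Bad] by simp
      then show ?thesis by simp
    qed
    have S1: "(\<Sum>j<K. cmod (\<Sum>r<L. F (p + j * L + r)))
        \<le> real K * (G / s\<delta>) + real (card Bad) * (G * real L) + real K * (real L * e0)"
    proof -
      have "(\<Sum>j<K. cmod (\<Sum>r<L. F (p + j * L + r)))
          \<le> (\<Sum>j<K. G / s\<delta> + (if j \<in> Bad then G * real L else 0) + real L * e0)"
      proof (rule sum_mono)
        fix j assume "j \<in> {..<K}"
        then have j: "j < K" by simp
        have "G * cmod (\<Sum>r<L. z j ^ r) \<le> G / s\<delta> + (if j \<in> Bad then G * real L else 0)"
        proof (cases "j \<in> Bad")
          case True
          have "G * cmod (\<Sum>r<L. z j ^ r) \<le> G * real L" using zL G by (intro mult_left_mono) auto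
          moreover have "G / s\<delta> \<ge> 0" using G s\<delta> by simp
          ultimately show ?thesis using True by simp
        next
          case False
          then have "\<not> cos \<delta> \<le> cos (I' (t j))" using j unfolding Bad_def by auto
          then have "G * cmod (\<Sum>r<L. z j ^ r) \<le> G * (1 / s\<delta>)" using zgood G by (intro mult_left_mono) auto
          then show ?thesis using False by simp
        qed
        then show "cmod (\<Sum>r<L. F (p + j * L + r)) \<le> G / s\<delta> + (if j \<in> Bad then G * real L else 0) + real L * e0"
          using blk[OF j] by linarith
      qed
      also have "\<dots> = real K * (G / s\<delta>) + real (card Bad) * (G * real L) + real K * (real L * e0)"
        using sBad by (simp add: sum.distrib)
      finally show ?thesis .
    qed
    have rem: "cmod (\<Sum>y\<in>{K * L..<n}. F (p + y)) \<le> real L * G"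
    proof -
      have "cmod (\<Sum>y\<in>{K * L..<n}. F (p + y)) \<le> (\<Sum>y\<in>{K * L..<n}. cmod (F (p + y)))" by (rule norm_sum)
      also have "\<dots> \<le> (\<Sum>y\<in>{K * L..<n}. G)"
      proof (rule sum_mono)
        fix y assume "y \<in> {K * L..<n}"
        then have "p \<le> p + y" "p + y \<le> q" unfolding n_def by auto
        then show "cmod (F (p + y)) \<le> G" by (rule Fb)
      qed
      also have "\<dots> = real (n - K * L) * G" by simp
      also have "\<dots> \<le> real L * G"
      proof -
        have "n - K * L \<le> L" using KL by linarith
        then have "real (n - K * L) \<le> real L" by (rule of_nat_mono)
        then show ?thesis by (rule mult_right_mono) (use G in simp)
      qed
      finally show ?thesis .
    qed
    have tot: "cmod (\<Sum>x\<in>{p..q}. F x)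
        \<le> real K * (G / s\<delta>) + real (card Bad) * (G * real L) + real K * (real L * e0) + real L * G"
    proof -
      have "cmod (\<Sum>x\<in>{p..q}. F x) = cmod ((\<Sum>j<K. \<Sum>r<L. F (p + j * L + r)) + (\<Sum>y\<in>{K * L..<n}. F (p + y)))"
        using sum1 split by simp
      also have "\<dots> \<le> (\<Sum>j<K. cmod (\<Sum>r<L. F (p + j * L + r))) + cmod (\<Sum>y\<in>{K * L..<n}. F (p + y))"
        by (rule order.trans[OF norm_triangle_ineq add_right_mono]) (rule norm_sum)
      finally show ?thesis using S1 rem by linarith
    qed
    have a1: "real K * real L \<le> W * real N"
    proof -
      have "real (K * L) \<le> real n" using KL(1) by (rule of_nat_mono)
      then show ?thesis using nW by simp
    qed
    have a2: "8 * W * G \<le> real L * (s\<delta> * \<epsilon>)"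
      using Lbig s\<delta> \<epsilon> by (simp add: pos_divide_le_eq)
    have T1: "real K * (G / s\<delta>) \<le> \<epsilon> / 8 * real N"
    proof -
      have c: "8 * real L * s\<delta> > 0" using L2 s\<delta> by simp
      have "real K * (G / s\<delta>) * (8 * real L * s\<delta>) = 8 * G * (real K * real L)" using s\<delta> by (simp add: field_simps)
      also have "\<dots> \<le> 8 * G * (W * real N)" using a1 G by (intro mult_left_mono) auto
      also have "\<dots> = (8 * W * G) * real N" by simp
      also have "\<dots> \<le> (real L * (s\<delta> * \<epsilon>)) * real N" using a2 N0 by (intro mult_right_mono) auto
      also have "\<dots> = \<epsilon> / 8 * real N * (8 * real L * s\<delta>)" by simp
      finally show ?thesis using c by (simp only: mult_le_cancel_right_pos)
    qed
    have T2: "real (card Bad) * (G * real L) \<le> \<epsilon> / 4 * real N"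
    proof -
      have "real L \<le> 2 * (real L - 1)" using L2 by simp
      then have "real (card Bad) * (G * real L) \<le> real (card Bad) * (G * (2 * (real L - 1)))"
        using G by (intro mult_left_mono) auto
      also have "\<dots> = 2 * G * (real (card Bad) * (real L - 1))" by simp
      also have "\<dots> \<le> 2 * G * (\<epsilon> / (8 * G) * real N)" using cB G by (intro mult_left_mono) auto
      also have "\<dots> = \<epsilon> / 4 * real N" using G by (simp add: field_simps)
      finally show ?thesis .
    qed
    have e0v: "e0 = \<epsilon> / (4 * W)" unfolding e0_def \<eta>_def using G W L2 by (simp add: field_simps)
    have T3: "real K * (real L * e0) \<le> \<epsilon> / 4 * real N"
    proof -
      have "real K * (real L * e0) = (real K * real L) * e0" by simp
      also have "\<dots> \<le> (W * real N) * e0" using a1 e0v \<epsilon> W by (intro mult_right_mono) auto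
      also have "\<dots> = \<epsilon> / 4 * real N" using e0v W by (simp add: field_simps)
      finally show ?thesis .
    qed
    have "cmod (\<Sum>x\<in>{p..q}. F x) \<le> \<epsilon> * real N"
    proof -
      have e1: "\<epsilon> / 8 * real N = (\<epsilon> * real N) / 8" "\<epsilon> / 4 * real N = (\<epsilon> * real N) / 4" by simp_all
      have e2: "\<epsilon> * real N > 0" using \<epsilon> N0 by simp
      show ?thesis using tot T1 T2 T3 elim(2) e2 unfolding e1 by linarith
    qed
    then show ?case unfolding p_def q_def F_def by simp
  qed
qed



lemma msmall_from_meas:
  fixes a b :: real and I' :: "real \<Rightarrow> real"
  assumes meas: "\<exists>\<alpha>>0. (\<lambda>\<delta>. measure lebesgue {x \<in> {a..b}. \<exists>k::int. \<bar>I' x - 2 * pi * of_int k\<bar> \<le> \<delta>})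
                    \<in> O[at_right 0](\<lambda>\<delta>. \<delta> powr \<alpha>)"
   and \<eta>: "\<eta> > 0"
  shows "\<exists>\<delta>. 0 < \<delta> \<and> \<delta> \<le> pi/2 \<and> measure lebesgue {x\<in>{a..b}. cos (2*\<delta>) \<le> cos (I' x)} \<le> \<eta>"
proof -
  obtain \<alpha> where \<alpha>: "\<alpha> > 0" and O: "(\<lambda>\<delta>. measure lebesgue {x \<in> {a..b}. \<exists>k::int. \<bar>I' x - 2 * pi * of_int k\<bar> \<le> \<delta>})
                    \<in> O[at_right 0](\<lambda>\<delta>. \<delta> powr \<alpha>)" using meas by blast
  obtain c where c: "c > 0" and ev: "\<forall>\<^sub>F \<delta> in at_right 0. norm (measure lebesgue {x \<in> {a..b}. \<exists>k::int. \<bar>I' x - 2 * pi * of_int k\<bar> \<le> \<delta>}) \<le> c * norm (\<delta> powr \<alpha>)"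
    using O by (rule landau_o.bigE)
  obtain b0 where b0: "b0 > 0" and P: "\<And>y. y > 0 \<Longrightarrow> y < b0 \<Longrightarrow> norm (measure lebesgue {x \<in> {a..b}. \<exists>k::int. \<bar>I' x - 2 * pi * of_int k\<bar> \<le> y}) \<le> c * norm (y powr \<alpha>)"
    using ev unfolding eventually_at_right_field by auto
  define y where "y = min (b0 / 2) (min pi ((\<eta> / c) powr (1 / \<alpha>)))"
  have ypos: "y > 0" unfolding y_def using b0 \<eta> c by simp
  have yb: "y < b0" unfolding y_def using b0 by simp
  have ypi: "y \<le> pi" unfolding y_def by simp
  have "y powr \<alpha> \<le> ((\<eta> / c) powr (1 / \<alpha>)) powr \<alpha>"
    using ypos \<alpha> by (intro powr_mono2) (auto simp: y_def)
  also have "\<dots> = \<eta> / c" using \<alpha> \<eta> c by (simp add: powr_powr)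
  finally have yp: "y powr \<alpha> \<le> \<eta> / c" .
  have "norm (measure lebesgue {x \<in> {a..b}. \<exists>k::int. \<bar>I' x - 2 * pi * of_int k\<bar> \<le> y}) \<le> c * norm (y powr \<alpha>)"
    using P ypos yb by blast
  also have "\<dots> = c * y powr \<alpha>" by simp
  also have "\<dots> \<le> c * (\<eta> / c)" using yp c by (intro mult_left_mono) auto
  also have "\<dots> = \<eta>" using c by simp
  finally have m: "measure lebesgue {x \<in> {a..b}. \<exists>k::int. \<bar>I' x - 2 * pi * of_int k\<bar> \<le> y} \<le> \<eta>" by simp
  have "{x \<in> {a..b}. \<exists>k::int. \<bar>I' x - 2 * pi * of_int k\<bar> \<le> y} = {x\<in>{a..b}. cos (2*(y/2)) \<le> cos (I' x)}"
    using cos_k[of y] ypos ypi by auto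
  then show ?thesis using m ypos ypi by (intro exI[of _ "y/2"]) auto
qed

theorem proposition4p2:
  fixes a b d :: real
    and g g' :: "real \<Rightarrow> complex"
    and I I' I'' :: "real \<Rightarrow> real"
    and f :: "nat \<Rightarrow> complex"
  assumes ab: "0 \<le> a" "a < b"
    and g_deriv: "\<And>t. t \<in> {a..b} \<Longrightarrow> (g has_vector_derivative g' t) (at t within {a..b})"
    and g'_cont: "continuous_on {a..b} g'"
    and I_deriv: "\<And>t. t \<in> {a..b} \<Longrightarrow> (I has_real_derivative I' t) (at t within {a..b})"
    and I'_deriv: "\<And>t. t \<in> {a..b} \<Longrightarrow> (I' has_real_derivative I'' t) (at t within {a..b})"
    and I''_cont: "continuous_on {a..b} I''"
    and meas: "\<exists>\<alpha>>0. (\<lambda>\<delta>. measure lebesgue {x \<in> {a..b}. \<exists>k::int. \<bar>I' x - 2 * pi * of_int k\<bar> \<le> \<delta>})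
                    \<in> O[at_right 0](\<lambda>\<delta>. \<delta> powr \<alpha>)"
    and unif: "\<forall>\<epsilon>>0. \<forall>\<^sub>F N in sequentially. \<forall>t\<in>{a..b}.
                 cmod (f (nat \<lfloor>t * real N\<rfloor>) - exp (\<i> * of_real (real N * I t)) * g t * of_real (real N powr d))
                   \<le> \<epsilon> * real N powr d"
  shows "(\<lambda>N. \<Sum>x\<in>{nat \<lfloor>a * real N\<rfloor> + 1 .. nat \<lfloor>b * real N\<rfloor>}. f x) \<in> o(\<lambda>N. of_real (real N powr (d + 1)))"
proof (rule landau_o.smallI)
  fix c :: real assume c: "c > 0"
  have gc: "continuous_on {a..b} g"
    unfolding continuous_on_eq_continuous_within using g_deriv has_vector_derivative_continuous by blast
  have I'c: "continuous_on {a..b} I'" by (rule DERIV_continuous_on[OF I'_deriv])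
  define W where "W = b - a + 1"
  have W: "W \<ge> 1" using ab unfolding W_def by simp
  have evc: "\<forall>\<^sub>F N in sequentially. cmod (\<Sum>x\<in>{nat \<lfloor>a * real N\<rfloor> + 1 .. nat \<lfloor>b * real N\<rfloor>}.
            exp (\<i> * of_real (real N * I (real x / real N))) * g (real x / real N)) \<le> c / 2 * real N"
    using c by (intro core[OF ab gc I_deriv I'c msmall_from_meas[OF meas]]) auto
  have evu: "\<forall>\<^sub>F N in sequentially. \<forall>t\<in>{a..b}.
                 cmod (f (nat \<lfloor>t * real N\<rfloor>) - exp (\<i> * of_real (real N * I t)) * g t * of_real (real N powr d))
                   \<le> c / (2 * W) * real N powr d"
    using unif[rule_format, of "c / (2 * W)"] c W by simp
  show "\<forall>\<^sub>F N in sequentially. norm (\<Sum>x\<in>{nat \<lfloor>a * real N\<rfloor> + 1 .. nat \<lfloor>b * real N\<rfloor>}. f x)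
          \<le> c * norm (of_real (real N powr (d + 1)) :: complex)"
    using evc evu eventually_ge_at_top[of 1]
  proof eventually_elim
    case (elim N)
    have N0: "real N > 0" using elim(3) by simp
    have N1: "real N \<ge> 1" using elim(3) by simp
    define p where "p = nat \<lfloor>a * real N\<rfloor> + 1"
    define q where "q = nat \<lfloor>b * real N\<rfloor>"
    define H where "H = (\<lambda>x::nat. exp (\<i> * of_real (real N * I (real x / real N))) * g (real x / real N))"
    have pa: "a * real N < real p"
    proof -
      have "0 \<le> a * real N" using ab N0 by simp
      then have "real (nat \<lfloor>a * real N\<rfloor>) = of_int \<lfloor>a * real N\<rfloor>" by simp
      then show ?thesis unfolding p_def by linarith
    qed
    have qb: "real q \<le> b * real N"
    proof -
      have "0 \<le> b * real N" using ab N0 by simp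
      then have "real (nat \<lfloor>b * real N\<rfloor>) = of_int \<lfloor>b * real N\<rfloor>" by simp
      then show ?thesis unfolding q_def by linarith
    qed
    have inab: "real x / real N \<in> {a..b}" if "p \<le> x" "x \<le> q" for x
    proof -
      have "a * real N \<le> real x" using pa that by linarith
      moreover have "real x \<le> b * real N" using qb that by linarith
      ultimately show ?thesis using N0 by (simp add: field_simps)
    qed
    have card: "real (card {p..q}) \<le> W * real N"
    proof (cases "p \<le> q + 1")
      case True
      then have "real (card {p..q}) = real q + 1 - real p" by simp
      also have "\<dots> \<le> (b - a) * real N + real N" using pa qb N1 by (simp add: algebra_simps)
      finally show ?thesis unfolding W_def by (simp add: algebra_simps)
    next
      case False
      then show ?thesis using W N0 by simp
    qed
    have pw: "real N powr d \<ge> 0" by simp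
    have diff: "cmod (f x - H x * of_real (real N powr d)) \<le> c / (2 * W) * real N powr d" if "x \<in> {p..q}" for x
    proof -
      have t: "real x / real N \<in> {a..b}" using inab that by auto
      have "nat \<lfloor>real x / real N * real N\<rfloor> = x" using N0 by simp
      then show ?thesis using elim(2)[rule_format, OF t] unfolding H_def by simp
    qed
    have "(\<Sum>x\<in>{p..q}. f x) = of_real (real N powr d) * (\<Sum>x\<in>{p..q}. H x) + (\<Sum>x\<in>{p..q}. f x - H x * of_real (real N powr d))"
      by (simp add: sum_distrib_left sum_distrib_right sum_subtractf mult.commute)
    then have "cmod (\<Sum>x\<in>{p..q}. f x) \<le> cmod (of_real (real N powr d) * (\<Sum>x\<in>{p..q}. H x)) + cmod (\<Sum>x\<in>{p..q}. f x - H x * of_real (real N powr d))"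
      by (metis norm_triangle_ineq)
    also have "\<dots> \<le> real N powr d * (c / 2 * real N) + (\<Sum>x\<in>{p..q}. c / (2 * W) * real N powr d)"
    proof (rule add_mono)
      have "cmod (of_real (real N powr d) * (\<Sum>x\<in>{p..q}. H x)) = real N powr d * cmod (\<Sum>x\<in>{p..q}. H x)"
        by (simp add: norm_mult)
      also have "\<dots> \<le> real N powr d * (c / 2 * real N)"
        using elim(1) unfolding H_def p_def q_def by (intro mult_left_mono) auto
      finally show "cmod (of_real (real N powr d) * (\<Sum>x\<in>{p..q}. H x)) \<le> real N powr d * (c / 2 * real N)" .
      show "cmod (\<Sum>x\<in>{p..q}. f x - H x * of_real (real N powr d)) \<le> (\<Sum>x\<in>{p..q}. c / (2 * W) * real N powr d)"
        by (rule order.trans[OF norm_sum sum_mono]) (rule diff)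
    qed
    also have "\<dots> = real N powr d * (c / 2 * real N) + real (card {p..q}) * (c / (2 * W) * real N powr d)" by simp
    also have "\<dots> \<le> real N powr d * (c / 2 * real N) + (W * real N) * (c / (2 * W) * real N powr d)"
      using card c W by (intro add_left_mono mult_right_mono) auto
    also have "\<dots> = c * (real N powr d * real N)" using W by (simp add: field_simps)
    also have "\<dots> = c * norm (of_real (real N powr (d + 1)) :: complex)"
    proof -
      have "norm (of_real (real N powr (d + 1)) :: complex) = \<bar>real N powr (d + 1)\<bar>" by (rule norm_of_real)
      also have "\<dots> = real N powr d * real N" using N0 by (simp add: powr_add)
      finally have nrm: "norm (of_real (real N powr (d + 1)) :: complex) = real N powr d * real N" .
      show ?thesis by (simp only: nrm)
    qed
    finally show ?case unfolding p_def q_def .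
  qed
qed


end
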